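(* Let $\alpha,\beta$ be real numbers with $\beta\le 1<\alpha$. Then the $\beta$-Ces\`aro operator $C_\beta$ maps $\mathcal{B}_\alpha^0$ into $\mathcal{B}_\alpha^0$ and is a bounded linear operator from $(\mathcal{B}_\alpha^0,\|\cdot\|_{\mathcal{B}_\alpha})$ to itself.
   Context: $\mathbb{D}=\{z\in\mathbb{C}:|z|<1\}$. For $\alpha>0$, the $\alpha$-Bloch space $\mathcal{B}_\alpha$ is the space of analytic functions $f$ on $\mathbb{D}$ with $\|f\|_{\mathcal{B}_\alpha}:=\sup_{z\in\mathbb{D}}(1-|z|^2)^\alpha|f'(z)|<\infty$. $\mathcal{B}_\alpha^0=\{f\in\mathcal{B}_\alpha: f(0)=0\}$, normed by $\|\cdot\|_{\mathcal{B}_\alpha}$. For $\beta\in\mathbb{R}$, the $\beta$-Ces\`aro operator is $C_\beta(f)(z)=\int_0^z \frac{f(w)}{w(1-w)^\beta}\,dw$ for analytic $f$ on $\mathbb{D}$ with $f(0)=0$, where $(1-w)^{\beta}$ is defined by the principal branch. *)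

theory Defs
  imports "HOL-Complex_Analysis.Complex_Analysis"
begin

definition disc :: "complex set" where
  "disc = ball 0 1"

definition bloch_norm :: "real \<Rightarrow> (complex \<Rightarrow> complex) \<Rightarrow> real" where
  "bloch_norm \<alpha> f = (SUP z\<in>disc. (1 - (cmod z)\<^sup>2) powr \<alpha> * cmod (deriv f z))"

definition in_bloch :: "real \<Rightarrow> (complex \<Rightarrow> complex) \<Rightarrow> bool" where
  "in_bloch \<alpha> f \<longleftrightarrow> f holomorphic_on disc \<and>
     bdd_above ((\<lambda>z. (1 - (cmod z)\<^sup>2) powr \<alpha> * cmod (deriv f z)) ` disc)"

definition in_bloch0 :: "real \<Rightarrow> (complex \<Rightarrow> complex) \<Rightarrow> bool" where
  "in_bloch0 \<alpha> f \<longleftrightarrow> in_bloch \<alpha> f \<and> f 0 = 0"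

text \<open>At w = 0 the integrand is given its removable value f'(0) (irrelevant for the integral).\<close>
definition cesaro :: "real \<Rightarrow> (complex \<Rightarrow> complex) \<Rightarrow> complex \<Rightarrow> complex" where
  "cesaro \<beta> f z = contour_integral (linepath 0 z)
     (\<lambda>w. if w = 0 then deriv f 0 else f w / (w * (1 - w) powr (complex_of_real \<beta>)))"

end

theory Submission
  imports Defs
begin

definition G :: "real \<Rightarrow> (complex \<Rightarrow> complex) \<Rightarrow> complex \<Rightarrow> complex" where
  "G \<beta> f w = (if w = 0 then deriv f 0 else f w / w) / (1 - w) powr (complex_of_real \<beta>)"

lemma cesaro_G: "cesaro \<beta> f z = contour_integral (linepath 0 z) (G \<beta> f)"
  unfolding cesaro_def G_def by (rule arg_cong[where f="contour_integral _"]) auto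

lemma disc_Re: "w \<in> disc \<Longrightarrow> 0 < Re (1 - w)"
  unfolding disc_def using complex_Re_le_cmod[of w] by auto

lemma G_holo:
  assumes "f holomorphic_on disc" "f 0 = 0"
  shows "G \<beta> f holomorphic_on disc"
proof -
  have "(\<lambda>z. if z = 0 then deriv f 0 else (f z - f 0) / (z-0)) holomorphic_on disc"
    by (rule pole_lemma[OF assms(1)]) (auto simp: disc_def)
  moreover have "(\<lambda>z. if z = 0 then deriv f 0 else (f z - f 0) / (z-0)) = (\<lambda>z. if z = 0 then deriv f 0 else f z / z)"
    using assms(2) by auto
  ultimately have q: "(\<lambda>z. if z = 0 then deriv f 0 else f z / z) holomorphic_on disc"
    by simp
  have p: "(\<lambda>w. (1 - w) powr (complex_of_real \<beta>)) holomorphic_on disc"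
    by (rule holomorphic_on_powr) (auto intro!: holomorphic_intros dest!: disc_Re simp: nonpos_Reals_def)
  have "(\<lambda>w. (if w = 0 then deriv f 0 else f w / w) / (1 - w) powr (complex_of_real \<beta>)) holomorphic_on disc"
    by (rule holomorphic_on_divide[OF q p]) (auto dest!: disc_Re)
  then show ?thesis unfolding G_def[abs_def] .
qed

lemma cesaro_deriv:
  assumes "f holomorphic_on disc" "f 0 = 0" "z \<in> disc"
  shows "(cesaro \<beta> f has_field_derivative G \<beta> f z) (at z)"
proof -
  have cv: "convex disc" "open disc" by (auto simp: disc_def)
  obtain h where h: "\<And>x. x \<in> disc \<Longrightarrow> (h has_field_derivative G \<beta> f x) (at x within disc)"
    using holomorphic_convex_primitive'[OF cv G_holo[OF assms(1,2)]] by blast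
  have seg: "path_image (linepath 0 x) \<subseteq> disc" if "x \<in> disc" for x
  proof -
    have "0 \<in> disc" by (simp add: disc_def)
    then show ?thesis using that cv(1) closed_segment_subset[of 0 disc x] by auto
  qed
  have eq: "cesaro \<beta> f x = h x - h 0" if "x \<in> disc" for x
    using contour_integral_unique[OF contour_integral_primitive[OF h valid_path_linepath seg[OF that]]]
    by (simp add: cesaro_G)
  have "((\<lambda>x. h x - h 0) has_field_derivative G \<beta> f z) (at z)"
    using h[OF assms(3)] at_within_open[OF assms(3) cv(2)] by (auto intro!: derivative_eq_intros)
  then show ?thesis
    by (rule has_field_derivative_transform_within_open[OF _ cv(2) assms(3)]) (simp add: eq)
qed

lemma cesaro_0: "cesaro \<beta> f 0 = 0"
  by (simp add: cesaro_def)

lemma seg_bound: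
  assumes holf: "f holomorphic_on disc" and z: "z \<in> disc"
    and phic: "continuous_on {0..1} \<phi>"
    and phid: "\<And>t. 0 < t \<Longrightarrow> t < 1 \<Longrightarrow> (\<phi> has_real_derivative \<phi>' t) (at t)"
    and bnd: "\<And>t. 0 < t \<Longrightarrow> t < 1 \<Longrightarrow> cmod z * cmod (deriv f (of_real t * z)) \<le> \<phi>' t"
  shows "cmod (f z - f 0) \<le> \<phi> 1 - \<phi> 0"
proof -
  have inD: "of_real t * z \<in> disc" if "0 \<le> t" "t \<le> 1" for t :: real
  proof -
    have "cmod (of_real t * z) = t * cmod z" using that by (simp add: norm_mult)
    also have "\<dots> \<le> cmod z" using that by (simp add: mult_left_le_one_le)
    finally show ?thesis using z by (simp add: disc_def)
  qed
  have od: "open disc" by (simp add: disc_def)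
  have "cmod ((\<lambda>t. f (of_real t * z)) 1 - (\<lambda>t. f (of_real t * z)) 0) \<le> \<phi> 1 - \<phi> 0"
  proof (rule differentiable_bound_general[where f' = "\<lambda>t. z * deriv f (of_real t * z)" and \<phi>' = \<phi>'])
    show "continuous_on {0..1} (\<lambda>t. f (of_real t * z))"
      apply (rule continuous_on_compose2[OF holomorphic_on_imp_continuous_on[OF holf]])
      using inD by (auto intro!: continuous_intros)
    show "continuous_on {0..1} \<phi>" by fact
    fix t :: real assume t: "0 < t" "t < 1"
    have fd: "(f has_field_derivative deriv f (of_real t * z)) (at (of_real t * z))"
      using holf inD[of t] t od by (auto intro!: holomorphic_derivI)
    have ld: "((\<lambda>t. of_real t * z) has_vector_derivative z) (at t)"
      by (auto intro!: derivative_eq_intros simp: has_vector_derivative_def scaleR_conv_of_real)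
    show "((\<lambda>t. f (of_real t * z)) has_vector_derivative z * deriv f (of_real t * z)) (at t)"
      using field_vector_diff_chain_at[OF ld fd] by (simp add: o_def)
    show "(\<phi> has_vector_derivative \<phi>' t) (at t)"
      using phid[OF t] by (simp add: has_real_derivative_iff_has_vector_derivative)
    show "cmod (z * deriv f (of_real t * z)) \<le> \<phi>' t"
      using bnd[OF t] by (simp add: norm_mult)
  qed simp
  then show ?thesis by simp
qed

lemma deriv_bnd:
  assumes bnd: "\<And>w. w \<in> disc \<Longrightarrow> (1 - (cmod w)\<^sup>2) powr \<alpha> * cmod (deriv f w) \<le> M"
    and w: "w \<in> disc"
  shows "cmod (deriv f w) \<le> M / (1 - (cmod w)\<^sup>2) powr \<alpha>"
proof -
  have "cmod w < 1" using w by (simp add: disc_def)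
  then have "(cmod w)\<^sup>2 < 1" by (simp add: abs_square_less_1)
  then have "0 < (1 - (cmod w)\<^sup>2) powr \<alpha>" by simp
  then show ?thesis using bnd[OF w] by (simp add: field_simps)
qed

lemma growth1:
  assumes a: "1 < \<alpha>" and holf: "f holomorphic_on disc" and f0: "f 0 = 0"
    and bnd: "\<And>w. w \<in> disc \<Longrightarrow> (1 - (cmod w)\<^sup>2) powr \<alpha> * cmod (deriv f w) \<le> M"
    and z: "z \<in> disc" and M: "0 \<le> M"
  shows "cmod (f z) \<le> M * (1 - cmod z) powr (1 - \<alpha>) / (\<alpha> - 1)"
proof -
  define r where "r = cmod z"
  have r: "0 \<le> r" "r < 1" using z by (auto simp: r_def disc_def)
  define \<phi> where "\<phi> t = M * (1 - t * r) powr (1 - \<alpha>) / (\<alpha> - 1)" for t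
  have pos: "0 < 1 - t * r" if "t \<le> 1" for t :: real
  proof -
    have "t * r \<le> r" using that r by (cases "t \<le> 0") (auto intro: order_trans[of _ 0] simp: mult_left_le_one_le mult_nonpos_nonneg)
    then show ?thesis using r by linarith
  qed
  have "cmod (f z - f 0) \<le> \<phi> 1 - \<phi> 0"
  proof (rule seg_bound[OF holf z, where \<phi>' = "\<lambda>t. M * r * (1 - t * r) powr (- \<alpha>)"])
    show "continuous_on {0..1} \<phi>"
    proof -
      have "\<forall>x\<in>{0..1}. 1 - x * r \<noteq> 0" using pos by force
      then show ?thesis unfolding \<phi>_def using a by (auto intro!: continuous_intros)
    qed
    fix t :: real assume t: "0 < t" "t < 1"
    have "((\<lambda>t. (1 - t * r) powr (1 - \<alpha>)) has_real_derivative
        (1 - \<alpha>) * (1 - t * r) powr (1 - \<alpha> - of_nat 1) * (- r)) (at t)"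
      using pos[of t] t by (intro DERIV_fun_powr) (auto intro!: derivative_eq_intros)
    then have "(\<phi> has_real_derivative M * ((1 - \<alpha>) * (1 - t * r) powr (1 - \<alpha> - of_nat 1) * (- r)) / (\<alpha> - 1)) (at t)"
      unfolding \<phi>_def using pos[of t] t a by (auto intro!: derivative_eq_intros)
    moreover have "M * ((1 - \<alpha>) * (1 - t * r) powr (1 - \<alpha> - of_nat 1) * (- r)) / (\<alpha> - 1) = M * r * (1 - t * r) powr (- \<alpha>)"
      using a by (simp add: field_simps)
    ultimately show "(\<phi> has_real_derivative M * r * (1 - t * r) powr (- \<alpha>)) (at t)" by simp
    have "t * r \<le> r" using t r by (simp add: mult_left_le_one_le)
    have tz: "complex_of_real t * z \<in> disc" and ctz: "cmod (complex_of_real t * z) = t * r"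
      using t r z \<open>t * r \<le> r\<close> by (auto simp: disc_def norm_mult r_def)
    have "cmod (deriv f (complex_of_real t * z)) \<le> M / (1 - (t * r)\<^sup>2) powr \<alpha>"
      using deriv_bnd[OF bnd tz] ctz by simp
    also have "\<dots> \<le> M / (1 - t * r) powr \<alpha>"
    proof (rule divide_left_mono[OF _ M])
      have "t * r \<le> 1" using pos[of t] t by simp
      have "0 \<le> t * r" using t r by simp
      then have "(t*r)\<^sup>2 \<le> t * r" using \<open>t * r \<le> 1\<close> by (simp add: power2_eq_square mult_left_le_one_le)
      then show "(1 - t * r) powr \<alpha> \<le> (1 - (t * r)\<^sup>2) powr \<alpha>"
        using pos[of t] t a by (intro powr_mono2) auto
      have "(t*r)\<^sup>2 < 1" using pos[of t] t \<open>0 \<le> t * r\<close> by (simp add: abs_square_less_1)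
      then show "0 < (1 - (t * r)\<^sup>2) powr \<alpha> * (1 - t * r) powr \<alpha>"
        using pos[of t] t by simp
    qed
    also have "\<dots> = M * (1 - t * r) powr (- \<alpha>)"
      by (simp add: powr_minus_divide)
    finally have d: "cmod (deriv f (complex_of_real t * z)) \<le> M * (1 - t * r) powr (- \<alpha>)" .
    show "cmod z * cmod (deriv f (complex_of_real t * z)) \<le> M * r * (1 - t * r) powr (- \<alpha>)"
      using mult_left_mono[OF d, of "cmod z"] by (simp add: r_def mult_ac)
  qed
  also have "\<phi> 1 - \<phi> 0 \<le> \<phi> 1"
    using M a by (simp add: \<phi>_def)
  finally show ?thesis using f0 by (simp add: \<phi>_def r_def)
qed

lemma growth0:
  assumes a: "0 < \<alpha>" and holf: "f holomorphic_on disc"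
    and bnd: "\<And>w. w \<in> disc \<Longrightarrow> (1 - (cmod w)\<^sup>2) powr \<alpha> * cmod (deriv f w) \<le> M"
    and z: "z \<in> disc" and M: "0 \<le> M"
  shows "cmod (f z - f 0) \<le> cmod z * M / (1 - (cmod z)\<^sup>2) powr \<alpha>"
proof -
  define r where "r = cmod z"
  have r: "0 \<le> r" "r < 1" using z by (auto simp: r_def disc_def)
  have r2: "r\<^sup>2 < 1" using r by (simp add: abs_square_less_1)
  have "cmod (f z - f 0) \<le> (\<lambda>t. t * (r * M / (1 - r\<^sup>2) powr \<alpha>)) 1 - (\<lambda>t. t * (r * M / (1 - r\<^sup>2) powr \<alpha>)) 0"
  proof (rule seg_bound[OF holf z, where \<phi>' = "\<lambda>t. r * M / (1 - r\<^sup>2) powr \<alpha>"])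
    show "continuous_on {0..1} (\<lambda>t. t * (r * M / (1 - r\<^sup>2) powr \<alpha>))"
      using r2 by (auto intro!: continuous_intros)
    fix t :: real assume t: "0 < t" "t < 1"
    show "((\<lambda>t. t * (r * M / (1 - r\<^sup>2) powr \<alpha>)) has_real_derivative r * M / (1 - r\<^sup>2) powr \<alpha>) (at t)"
      using r2 by (auto intro!: derivative_eq_intros)
    have "t * r \<le> r" using t r by (simp add: mult_left_le_one_le)
    have tz: "complex_of_real t * z \<in> disc" and ctz: "cmod (complex_of_real t * z) = t * r"
      using t r z \<open>t * r \<le> r\<close> by (auto simp: disc_def norm_mult r_def)
    have "cmod (deriv f (complex_of_real t * z)) \<le> M / (1 - (t * r)\<^sup>2) powr \<alpha>"
      using deriv_bnd[OF bnd tz] ctz by simp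
    also have "\<dots> \<le> M / (1 - r\<^sup>2) powr \<alpha>"
    proof (rule divide_left_mono[OF _ M])
      have "t * r \<le> r" using t r by (simp add: mult_left_le_one_le)
      moreover have "0 \<le> t * r" using t r by simp
      ultimately have "(t*r)\<^sup>2 \<le> r\<^sup>2" by (simp add: power_mono)
      then show "(1 - r\<^sup>2) powr \<alpha> \<le> (1 - (t * r)\<^sup>2) powr \<alpha>"
        using r2 a by (intro powr_mono2) auto
      show "0 < (1 - (t * r)\<^sup>2) powr \<alpha> * (1 - r\<^sup>2) powr \<alpha>"
        using r2 \<open>(t*r)\<^sup>2 \<le> r\<^sup>2\<close> by simp
    qed
    finally have d: "cmod (deriv f (complex_of_real t * z)) \<le> M / (1 - r\<^sup>2) powr \<alpha>" .
    show "cmod z * cmod (deriv f (complex_of_real t * z)) \<le> r * M / (1 - r\<^sup>2) powr \<alpha>"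
      using mult_left_mono[OF d, of "cmod z"] by (simp add: r_def mult_ac)
  qed
  then show ?thesis by (simp add: r_def)
qed

definition CC :: "real \<Rightarrow> real \<Rightarrow> real" where
  "CC \<alpha> \<beta> = 2 * 2 powr \<bar>\<beta>\<bar> * (1 + 2 powr \<alpha> * 2 / (\<alpha> - 1))"

lemma E_bounds:
  fixes z :: complex and \<beta> :: real
  assumes b: "\<beta> \<le> 1" and z: "cmod z < 1"
  shows "cmod (1 - z) powr (- \<beta>) \<le> 2 powr \<bar>\<beta>\<bar> * (if \<beta> \<le> 0 then 1 else (1 - cmod z) powr (- \<beta>))"
proof -
  have lo: "1 - cmod z \<le> cmod (1 - z)" using norm_triangle_ineq2[of 1 z] by simp
  have hi: "cmod (1 - z) \<le> 2" using norm_triangle_ineq4[of 1 z] z by simp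
  have p: "0 < 1 - cmod z" using z by simp
  show ?thesis
  proof (cases "\<beta> \<le> 0")
    case True
    have "cmod (1 - z) powr (- \<beta>) \<le> 2 powr (- \<beta>)"
      using True hi by (intro powr_mono2) auto
    then show ?thesis using True by simp
  next
    case False
    have "cmod (1 - z) powr (- \<beta>) \<le> (1 - cmod z) powr (- \<beta>)"
      using False lo p by (intro powr_mono2') auto
    also have "\<dots> \<le> 2 powr \<bar>\<beta>\<bar> * (1 - cmod z) powr (- \<beta>)"
      using False by (simp add: mult_le_cancel_right1 ge_one_powr_ge_zero)
    finally show ?thesis using False by simp
  qed
qed

lemma G_bound:
  assumes b: "\<beta> \<le> 1" and a: "1 < \<alpha>" and holf: "f holomorphic_on disc" and f0: "f 0 = 0"
    and bnd: "\<And>w. w \<in> disc \<Longrightarrow> (1 - (cmod w)\<^sup>2) powr \<alpha> * cmod (deriv f w) \<le> M"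
    and z: "z \<in> disc"
  shows "(1 - (cmod z)\<^sup>2) powr \<alpha> * cmod (G \<beta> f z) \<le> CC \<alpha> \<beta> * M"
proof -
  have "0 \<in> disc" by (simp add: disc_def)
  from bnd[OF this] have M: "0 \<le> M" by (metis norm_ge_zero order_trans zero_le_mult_iff powr_ge_zero)
  have C1: "1 \<le> CC \<alpha> \<beta>"
  proof -
    have "1 \<le> 2 powr \<bar>\<beta>\<bar>" by (simp add: ge_one_powr_ge_zero)
    moreover have "1 \<le> 1 + 2 powr \<alpha> * 2 / (\<alpha> - 1)" using a by simp
    ultimately have "1 \<le> 2 powr \<bar>\<beta>\<bar> * (1 + 2 powr \<alpha> * 2 / (\<alpha> - 1))"
      using mult_mono[of 1 "2 powr \<bar>\<beta>\<bar>" 1] by fastforce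
    then show ?thesis unfolding CC_def by simp
  qed
  show ?thesis
  proof (cases "z = 0")
    case True
    have "(1 - (cmod z)\<^sup>2) powr \<alpha> * cmod (G \<beta> f z) \<le> M"
      using bnd[OF z] True by (simp add: G_def)
    also have "\<dots> \<le> CC \<alpha> \<beta> * M" using C1 M by (simp add: mult_le_cancel_right1)
    finally show ?thesis .
  next
    case False
    define r where "r = cmod z"
    have r: "0 < r" "r < 1" using z False by (auto simp: r_def disc_def)
    define E where "E = cmod (1 - z) powr (- \<beta>)"
    have Ebnd: "E \<le> 2 powr \<bar>\<beta>\<bar> * (if \<beta> \<le> 0 then 1 else (1 - r) powr (- \<beta>))"
      unfolding E_def r_def using E_bounds[OF b] r by (simp add: r_def)
    have E0: "0 \<le> E" by (simp add: E_def)
    have G: "cmod (G \<beta> f z) = cmod (f z) / r * E"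
      using False by (simp add: G_def E_def r_def norm_divide norm_mult norm_powr_real_powr' powr_minus_divide)
    define A where "A = (1 - r\<^sup>2) powr \<alpha>"
    have r2: "r\<^sup>2 < 1" using r by (simp add: abs_square_less_1)
    have A0: "0 < A" using r2 by (simp add: A_def)
    have "A * cmod (G \<beta> f z) = (A * cmod (f z) / r) * E" by (simp add: G)
    also have "\<dots> \<le> CC \<alpha> \<beta> * M"
    proof (cases "r \<le> 1/2")
      case True
      have "cmod (f z) \<le> r * M / A"
        using growth0[OF _ holf bnd z M] a f0 by (simp add: r_def A_def)
      then have "A * cmod (f z) / r \<le> M" using A0 r by (simp add: field_simps)
      moreover have "E \<le> 2 powr \<bar>\<beta>\<bar> * 2"
      proof (cases "\<beta> \<le> 0")
        case True
        then have "E \<le> 2 powr \<bar>\<beta>\<bar>" using Ebnd by simp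
        moreover have "0 \<le> 2 powr \<bar>\<beta>\<bar>" by (rule powr_ge_zero)
        ultimately show ?thesis by argo
      next
        case nb: False
        have "(1 - r) powr (- \<beta>) \<le> (1/2) powr (- \<beta>)"
          using nb True r by (intro powr_mono2') auto
        also have "\<dots> = 2 powr \<beta>" by (simp add: powr_minus_divide powr_divide)
        also have "\<dots> \<le> 2 powr 1" using b by (intro powr_mono) auto
        finally have "(1 - r) powr (- \<beta>) \<le> 2" by simp
        then have "2 powr \<bar>\<beta>\<bar> * (1 - r) powr (- \<beta>) \<le> 2 powr \<bar>\<beta>\<bar> * 2"
          by (rule mult_left_mono) simp
        moreover have "E \<le> 2 powr \<bar>\<beta>\<bar> * (1 - r) powr (- \<beta>)" using Ebnd nb by simp
        ultimately show ?thesis by (rule order_trans[rotated])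
      qed
      ultimately have "A * cmod (f z) / r * E \<le> M * (2 powr \<bar>\<beta>\<bar> * 2)"
        using E0 M by (intro mult_mono) auto
      also have "\<dots> \<le> CC \<alpha> \<beta> * M"
        unfolding CC_def using M a by (simp add: algebra_simps mult_le_cancel_left1)
      finally show ?thesis .
    next
      case False
      have r1: "0 < 1 - r" using r by simp
      have fz: "cmod (f z) \<le> M * (1 - r) powr (1 - \<alpha>) / (\<alpha> - 1)"
        using growth1[OF a holf f0 bnd z M] by (simp add: r_def)
      have "1 - r\<^sup>2 \<le> 2 * (1 - r)"
        using r mult_nonneg_nonneg[of "1-r" "1-r"] by (simp add: power2_eq_square algebra_simps)
      then have "A \<le> (2 * (1 - r)) powr \<alpha>" unfolding A_def using r2 a by (intro powr_mono2) auto
      also have "\<dots> = 2 powr \<alpha> * (1 - r) powr \<alpha>" using r1 by (subst powr_mult) auto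
      finally have A2: "A \<le> 2 powr \<alpha> * (1 - r) powr \<alpha>" .
      have "A * cmod (f z) \<le> (2 powr \<alpha> * (1 - r) powr \<alpha>) * (M * (1 - r) powr (1 - \<alpha>) / (\<alpha> - 1))"
        using A2 fz A0 by (intro mult_mono) auto
      also have "\<dots> = 2 powr \<alpha> * M / (\<alpha> - 1) * ((1 - r) powr \<alpha> * (1 - r) powr (1 - \<alpha>))"
        by (simp add: algebra_simps)
      also have "(1 - r) powr \<alpha> * (1 - r) powr (1 - \<alpha>) = 1 - r"
        using r1 by (simp add: powr_add[symmetric])
      finally have Af: "A * cmod (f z) \<le> 2 powr \<alpha> * M / (\<alpha> - 1) * (1 - r)" .
      have ir: "1 / r \<le> 2" using False r by (simp add: field_simps)
      have X0: "0 \<le> A * cmod (f z)" using A0 by simp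
      have "A * cmod (f z) / r = (A * cmod (f z)) * (1 / r)" by simp
      also have "\<dots> \<le> (A * cmod (f z)) * 2" using mult_left_mono[OF ir X0] .
      finally have "A * cmod (f z) / r \<le> 2 * (A * cmod (f z))" by simp
      also have "\<dots> \<le> 2 * (2 powr \<alpha> * M / (\<alpha> - 1) * (1 - r))" using Af by simp
      finally have Afr: "A * cmod (f z) / r \<le> 2 * (2 powr \<alpha> * M / (\<alpha> - 1)) * (1 - r)" by simp
      have rE: "(1 - r) * E \<le> 2 powr \<bar>\<beta>\<bar>"
      proof (cases "\<beta> \<le> 0")
        case True
        then have "E \<le> 2 powr \<bar>\<beta>\<bar>" using Ebnd by simp
        moreover have "(1 - r) * E \<le> E" using E0 r by (simp add: mult_left_le_one_le)
        ultimately show ?thesis by simp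
      next
        case nb: False
        have "(1 - r) * E \<le> (1 - r) * (2 powr \<bar>\<beta>\<bar> * (1 - r) powr (- \<beta>))"
          using Ebnd nb r1 by (intro mult_left_mono) auto
        also have "\<dots> = 2 powr \<bar>\<beta>\<bar> * ((1 - r) powr 1 * (1 - r) powr (- \<beta>))" using r1 by simp
        also have "(1 - r) powr 1 * (1 - r) powr (- \<beta>) = (1 - r) powr (1 - \<beta>)"
          using powr_add[of "1 - r" 1 "- \<beta>"] by simp
        also have "(1 - r) powr (1 - \<beta>) \<le> 1" using r1 r b by (intro powr_le1) auto
        finally show ?thesis by simp
      qed
      have Q0: "0 \<le> 2 * (2 powr \<alpha> * M / (\<alpha> - 1))" using M a by simp
      have "A * cmod (f z) / r * E \<le> 2 * (2 powr \<alpha> * M / (\<alpha> - 1)) * (1 - r) * E"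
        using Afr E0 by (intro mult_right_mono) auto
      also have "\<dots> = 2 * (2 powr \<alpha> * M / (\<alpha> - 1)) * ((1 - r) * E)" by simp
      also have "\<dots> \<le> 2 * (2 powr \<alpha> * M / (\<alpha> - 1)) * 2 powr \<bar>\<beta>\<bar>"
        using rE Q0 by (intro mult_left_mono) auto
      also have "\<dots> \<le> CC \<alpha> \<beta> * M"
      proof -
        have aux: "\<And>x y::real. 0 \<le> x \<Longrightarrow> 0 \<le> y \<Longrightarrow> 2 * x \<le> 2 * y + 4 * x" by linarith
        define P where "P = (2::real) powr \<alpha>"
        define B where "B = (2::real) powr \<bar>\<beta>\<bar>"
        have T: "0 \<le> M * B * P / (\<alpha> - 1)" using M a by (simp add: P_def B_def)
        have T2: "0 \<le> M * B" using M by (simp add: B_def)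
        have e1: "2 * (P * M / (\<alpha> - 1)) * B = 2 * (M * B * P / (\<alpha> - 1))" by simp
        have e2: "CC \<alpha> \<beta> * M = 2 * (M * B) + 4 * (M * B * P / (\<alpha> - 1))"
          unfolding CC_def P_def[symmetric] B_def[symmetric] by (simp add: algebra_simps)
        show ?thesis unfolding P_def[symmetric] B_def[symmetric] e1 e2
          by (rule aux[OF T T2])
      qed
      finally show ?thesis .
    qed
    finally show ?thesis by (simp add: A_def r_def)
  qed
qed

lemma bloch_bnd:
  assumes "in_bloch \<alpha> f" "w \<in> disc"
  shows "(1 - (cmod w)\<^sup>2) powr \<alpha> * cmod (deriv f w) \<le> bloch_norm \<alpha> f"
  using assms unfolding in_bloch_def bloch_norm_def by (auto intro: cSUP_upper)

lemma cesaro_main: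
  assumes b: "\<beta> \<le> 1" and a: "1 < \<alpha>" and f: "in_bloch0 \<alpha> f"
  shows "in_bloch0 \<alpha> (cesaro \<beta> f) \<and> bloch_norm \<alpha> (cesaro \<beta> f) \<le> CC \<alpha> \<beta> * bloch_norm \<alpha> f"
proof -
  have holf: "f holomorphic_on disc" and f0: "f 0 = 0" and fb: "in_bloch \<alpha> f"
    using f by (auto simp: in_bloch0_def in_bloch_def)
  note bnd = bloch_bnd[OF fb]
  have od: "open disc" by (simp add: disc_def)
  have dv: "\<And>z. z \<in> disc \<Longrightarrow> (cesaro \<beta> f has_field_derivative G \<beta> f z) (at z)"
    using cesaro_deriv[OF holf f0] .
  have hol: "cesaro \<beta> f holomorphic_on disc"
    using dv od by (auto simp: holomorphic_on_open)
  have dd: "\<And>z. z \<in> disc \<Longrightarrow> deriv (cesaro \<beta> f) z = G \<beta> f z"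
    using dv by (rule DERIV_imp_deriv)
  have pt: "\<And>z. z \<in> disc \<Longrightarrow> (1 - (cmod z)\<^sup>2) powr \<alpha> * cmod (deriv (cesaro \<beta> f) z) \<le> CC \<alpha> \<beta> * bloch_norm \<alpha> f"
    using G_bound[OF b a holf f0 bnd] dd by simp
  have bdd: "bdd_above ((\<lambda>z. (1 - (cmod z)\<^sup>2) powr \<alpha> * cmod (deriv (cesaro \<beta> f) z)) ` disc)"
    using pt by (intro bdd_aboveI2[where M="CC \<alpha> \<beta> * bloch_norm \<alpha> f"]) auto
  have ne: "disc \<noteq> {}" by (auto simp: disc_def intro!: exI[of _ 0])
  have "bloch_norm \<alpha> (cesaro \<beta> f) \<le> CC \<alpha> \<beta> * bloch_norm \<alpha> f"
    unfolding bloch_norm_def[of _ "cesaro \<beta> f"] using pt ne by (intro cSUP_least) auto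
  then show ?thesis using hol bdd by (simp add: in_bloch0_def in_bloch_def cesaro_0)
qed

lemma cesaro_linear:
  assumes f: "in_bloch0 \<alpha> f" and g: "in_bloch0 \<alpha> g" and z: "z \<in> disc"
  shows "cesaro \<beta> (\<lambda>w. a * f w + b * g w) z = a * cesaro \<beta> f z + b * cesaro \<beta> g z"
proof -
  have holf: "f holomorphic_on disc" and f0: "f 0 = 0"
    and holg: "g holomorphic_on disc" and g0: "g 0 = 0"
    using f g by (auto simp: in_bloch0_def in_bloch_def)
  have od: "open disc" and d0: "0 \<in> disc" by (auto simp: disc_def)
  have fd: "f field_differentiable at 0" "g field_differentiable at 0"
    using holf holg od d0 by (auto intro: holomorphic_on_imp_differentiable_at)
  have "deriv (\<lambda>w. a * f w + b * g w) 0 = a * deriv f 0 + b * deriv g 0"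
    using fd by (simp add: field_differentiable_mult)
  then have Geq: "G \<beta> (\<lambda>w. a * f w + b * g w) = (\<lambda>w. a * G \<beta> f w + b * G \<beta> g w)"
    by (auto simp: G_def add_divide_distrib)
  have seg: "closed_segment 0 z \<subseteq> disc"
    using closed_segment_subset[of 0 disc z] d0 z by (auto simp: disc_def)
  have ci: "G \<beta> f contour_integrable_on linepath 0 z" "G \<beta> g contour_integrable_on linepath 0 z"
    using continuous_on_subset[OF holomorphic_on_imp_continuous_on[OF G_holo[OF holf f0]] seg]
      continuous_on_subset[OF holomorphic_on_imp_continuous_on[OF G_holo[OF holg g0]] seg]
    by (auto intro: contour_integrable_continuous_linepath)
  show ?thesis
    unfolding cesaro_G Geq
    using ci by (simp add: contour_integral_add contour_integral_lmul contour_integrable_lmul)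
qed

theorem theorem2p3:
  fixes \<alpha> \<beta> :: real
  assumes "\<beta> \<le> 1" and "1 < \<alpha>"
  shows "(\<forall>f. in_bloch0 \<alpha> f \<longrightarrow> in_bloch0 \<alpha> (cesaro \<beta> f))
    \<and> (\<forall>f g a b. in_bloch0 \<alpha> f \<longrightarrow> in_bloch0 \<alpha> g \<longrightarrow>
          (\<forall>z\<in>disc. cesaro \<beta> (\<lambda>w. a * f w + b * g w) z = a * cesaro \<beta> f z + b * cesaro \<beta> g z))
    \<and> (\<exists>C. \<forall>f. in_bloch0 \<alpha> f \<longrightarrow> bloch_norm \<alpha> (cesaro \<beta> f) \<le> C * bloch_norm \<alpha> f)"
  using cesaro_main[OF assms] cesaro_linear by blast

end
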